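(* Let $\lambda_i$ be a minuscule fundamental weight of a complex simple Lie algebra, let $u\in W^{P_i}$, and let $\alpha$ be a positive root. (I) If $\ell(s_\alpha u)=\ell(u)+1$, then $\alpha$ is a simple root and $(u(\lambda_i),\alpha^\vee)=1$. (II) If $\ell(s_\alpha u)=\ell(u)-(s-1)$, then $\alpha=\psi$ and $(u(\lambda_i),\psi^\vee)=-1$. Here the length $\ell$ is taken in $W^{P_i}$.
   Context: Simple roots $\alpha_1,\dots,\alpha_l$, Weyl group $W$ with Coxeter length $\ell$, $\alpha^\vee=2\alpha/(\alpha,\alpha)$. $\lambda_i$ minuscule: $(\lambda_i,\alpha_j^\vee)=\delta_{ij}$ and $(\lambda_i,\beta^\vee)\le1$ for all positive roots $\beta$. $W_{P_i}$ is the subgroup generated by $s_{\alpha_j}$, $j\ne i$; $W^{P_i}$ is the set of minimal length coset representatives of $W/W_{P_i}$; the length in $W^{P_i}$ of $x\in W$ is the length of the unique $u'\in W^{P_i}$ with $x\in u'W_{P_i}$. $\psi=\sum_j q_j\alpha_j$ is the highest root and $s=1+\sum_j q_j$ is the Coxeter number. *)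

theory Defs
  imports "HOL-Analysis.Analysis"
begin

definition reflection :: "'a::euclidean_space \<Rightarrow> 'a \<Rightarrow> 'a" where
  "reflection a x = x - (2 * (x \<bullet> a) / (a \<bullet> a)) *\<^sub>R a"

definition coroot :: "'a::euclidean_space \<Rightarrow> 'a" where
  "coroot a = (2 / (a \<bullet> a)) *\<^sub>R a"

definition root_system :: "'a::euclidean_space set \<Rightarrow> bool" where
  "root_system R \<longleftrightarrow> finite R \<and> 0 \<notin> R \<and> span R = UNIV
     \<and> (\<forall>a\<in>R. \<forall>b\<in>R. reflection a b \<in> R)
     \<and> (\<forall>a\<in>R. \<forall>b\<in>R. b \<bullet> coroot a \<in> \<int>)
     \<and> (\<forall>a\<in>R. \<forall>c::real. c *\<^sub>R a \<in> R \<longrightarrow> c = 1 \<or> c = -1)"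

definition irreducible_rs :: "'a::euclidean_space set \<Rightarrow> bool" where
  "irreducible_rs R \<longleftrightarrow> \<not> (\<exists>A B. A \<noteq> {} \<and> B \<noteq> {} \<and> A \<union> B = R \<and> A \<inter> B = {}
                            \<and> (\<forall>a\<in>A. \<forall>b\<in>B. a \<bullet> b = 0))"

definition nonneg_comb :: "'a::euclidean_space set \<Rightarrow> 'a \<Rightarrow> bool" where
  "nonneg_comb D x \<longleftrightarrow> (\<exists>c::'a \<Rightarrow> nat. x = (\<Sum>a\<in>D. real (c a) *\<^sub>R a))"

definition simple_system :: "'a::euclidean_space set \<Rightarrow> 'a set \<Rightarrow> bool" where
  "simple_system R D \<longleftrightarrow> D \<subseteq> R \<and> independent D
     \<and> (\<forall>b\<in>R. nonneg_comb D b \<or> nonneg_comb D (- b))"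

definition pos_roots :: "'a::euclidean_space set \<Rightarrow> 'a set \<Rightarrow> 'a set" where
  "pos_roots R D = {b \<in> R. nonneg_comb D b}"

definition simple_word :: "'a::euclidean_space list \<Rightarrow> 'a \<Rightarrow> 'a" where
  "simple_word xs = foldr (\<lambda>a f. reflection a \<circ> f) xs id"

definition weyl :: "'a::euclidean_space set \<Rightarrow> ('a \<Rightarrow> 'a) set" where
  "weyl D = {simple_word xs | xs. set xs \<subseteq> D}"

definition wlen :: "'a::euclidean_space set \<Rightarrow> ('a \<Rightarrow> 'a) \<Rightarrow> nat" where
  "wlen D w = (LEAST n. \<exists>xs. set xs \<subseteq> D \<and> length xs = n \<and> simple_word xs = w)"

definition WP :: "'a::euclidean_space set \<Rightarrow> 'a \<Rightarrow> ('a \<Rightarrow> 'a) set" where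
  "WP D ai = {simple_word xs | xs. set xs \<subseteq> D - {ai}}"

definition WupP :: "'a::euclidean_space set \<Rightarrow> 'a \<Rightarrow> ('a \<Rightarrow> 'a) set" where
  "WupP D ai = {u \<in> weyl D. \<forall>v\<in>WP D ai. wlen D u \<le> wlen D (u \<circ> v)}"

text \<open>Length in \<open>W^P\<close> of \<open>x\<close>: length of the unique \<open>u' \<in> W^P\<close> with \<open>x \<in> u' W_P\<close>.\<close>
definition lenP :: "'a::euclidean_space set \<Rightarrow> 'a \<Rightarrow> ('a \<Rightarrow> 'a) \<Rightarrow> nat" where
  "lenP D ai x = wlen D (THE u. u \<in> WupP D ai \<and> (\<exists>v\<in>WP D ai. x = u \<circ> v))"

definition fund_weight :: "'a::euclidean_space set \<Rightarrow> 'a \<Rightarrow> 'a \<Rightarrow> bool" where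
  "fund_weight D ai lam \<longleftrightarrow> (\<forall>b\<in>D. lam \<bullet> coroot b = (if b = ai then 1 else 0))"

definition minuscule :: "'a::euclidean_space set \<Rightarrow> 'a set \<Rightarrow> 'a \<Rightarrow> 'a \<Rightarrow> bool" where
  "minuscule R D ai lam \<longleftrightarrow> fund_weight D ai lam
     \<and> (\<forall>b\<in>pos_roots R D. lam \<bullet> coroot b \<le> 1)"

definition highest_root :: "'a::euclidean_space set \<Rightarrow> 'a set \<Rightarrow> 'a \<Rightarrow> bool" where
  "highest_root R D psi \<longleftrightarrow> psi \<in> R \<and> (\<forall>b\<in>R. nonneg_comb D (psi - b))"

definition height :: "'a::euclidean_space set \<Rightarrow> 'a \<Rightarrow> nat" where
  "height D x = (THE h. \<exists>c::'a \<Rightarrow> nat. x = (\<Sum>a\<in>D. real (c a) *\<^sub>R a) \<and> h = (\<Sum>a\<in>D. c a))"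

definition coxeter_number :: "'a::euclidean_space set \<Rightarrow> 'a \<Rightarrow> nat" where
  "coxeter_number D psi = 1 + height D psi"

end

theory Submission
  imports Defs
begin


lemma coroot_inner: "x \<bullet> coroot a = 2 * (x \<bullet> a) / (a \<bullet> a)"
  by (simp add: coroot_def)

lemma reflection_coroot: "reflection a x = x - (x \<bullet> coroot a) *\<^sub>R a"
  by (simp add: reflection_def coroot_inner)

lemma reflection_linear: "linear (reflection a)"
  unfolding reflection_coroot
  by (intro linearI) (auto simp: inner_add_left algebra_simps)

lemma reflection_inner: "reflection a x \<bullet> reflection a y = x \<bullet> y"
proof (cases "a = 0")
  case True then show ?thesis by (simp add: reflection_def)
next
  case False
  then have "a \<bullet> a \<noteq> 0" by simp
  then show ?thesis unfolding reflection_def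
    by (simp add: inner_diff_left inner_diff_right algebra_simps power2_eq_square) (simp add: field_simps inner_commute)
qed

lemma reflection_invol[simp]: "reflection a (reflection a x) = x"
proof (cases "a = 0")
  case True then show ?thesis by (simp add: reflection_def)
next
  case False
  then have "a \<bullet> a \<noteq> 0" by simp
  then show ?thesis unfolding reflection_def
    by (simp add: inner_diff_left algebra_simps)
qed

lemma reflection_comp_self[simp]: "reflection a \<circ> reflection a = id"
  by auto

lemma reflection_self: "a \<noteq> 0 \<Longrightarrow> reflection a a = - a"
  by (simp add: reflection_def scaleR_2)

lemma reflection_neg: "reflection (- a) = reflection a"
  by (auto simp: reflection_def)

lemma coroot_neg: "coroot (- a) = - coroot a"
  by (simp add: coroot_def)

lemma reflection_conj:
  assumes "linear w" and "\<And>x y. w x \<bullet> w y = x \<bullet> y"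
  shows "reflection (w a) (w x) = w (reflection a x)"
  unfolding reflection_def using assms
  by (simp add: linear_diff linear_scale)

lemma coroot_conj:
  assumes "linear w" and "\<And>x y. w x \<bullet> w y = x \<bullet> y"
  shows "coroot (w a) = w (coroot a)"
  unfolding coroot_def using assms by (simp add: linear_scale)

lemma sw_Nil[simp]: "simple_word [] = id" by (simp add: simple_word_def)
lemma sw_Cons[simp]: "simple_word (a # xs) = reflection a \<circ> simple_word xs"
  by (simp add: simple_word_def)
lemma sw_append: "simple_word (xs @ ys) = simple_word xs \<circ> simple_word ys"
  by (induction xs) auto

lemma sw_linear: "linear (simple_word xs)"
proof (induction xs)
  case (Cons a xs)
  then show ?case using linear_compose[OF Cons.IH reflection_linear[of a]] by (simp add: o_def)
qed (simp add: id_def linear_ident)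

lemma sw_inner: "simple_word xs x \<bullet> simple_word xs y = x \<bullet> y"
  by (induction xs arbitrary: x y) (auto simp: reflection_inner)

lemma sw_rev1[simp]: "simple_word (rev xs) (simple_word xs x) = x"
  by (induction xs arbitrary: x) (auto simp: sw_append)

lemma sw_rev2[simp]: "simple_word xs (simple_word (rev xs) x) = x"
  using sw_rev1[of "rev xs"] by simp

lemma sw_rev_comp1[simp]: "simple_word (rev xs) \<circ> simple_word xs = id" by auto
lemma sw_rev_comp2[simp]: "simple_word xs \<circ> simple_word (rev xs) = id" by auto

lemma sw_neg: "simple_word xs (- x) = - simple_word xs x"
  using sw_linear linear_neg by blast

lemma sw_refl_conj: "reflection (simple_word xs a) (simple_word xs x) = simple_word xs (reflection a x)"
  by (rule reflection_conj[OF sw_linear sw_inner])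

lemma sw_coroot: "coroot (simple_word xs a) = simple_word xs (coroot a)"
  by (rule coroot_conj[OF sw_linear sw_inner])

lemma sw_adj: "simple_word xs x \<bullet> y = x \<bullet> simple_word (rev xs) y"
  by (metis sw_inner sw_rev2)



locale rs =
  fixes R D :: "'a::euclidean_space set"
  assumes rsR: "root_system R" and ssD: "simple_system R D"
begin

lemma finR: "finite R" and zR: "0 \<notin> R" and spanR: "span R = UNIV"
  and reflR: "\<And>a b. a \<in> R \<Longrightarrow> b \<in> R \<Longrightarrow> reflection a b \<in> R"
  and intR: "\<And>a b. a \<in> R \<Longrightarrow> b \<in> R \<Longrightarrow> b \<bullet> coroot a \<in> \<int>"
  and redR: "\<And>a c. a \<in> R \<Longrightarrow> c *\<^sub>R a \<in> R \<Longrightarrow> c = 1 \<or> c = -1"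
  using rsR unfolding root_system_def by auto

lemma DR: "D \<subseteq> R" and indD: "independent D"
  and posneg: "\<And>b. b \<in> R \<Longrightarrow> nonneg_comb D b \<or> nonneg_comb D (- b)"
  using ssD unfolding simple_system_def by auto

lemma finD: "finite D" using DR finR finite_subset by blast

lemma comb_span: "(\<Sum>a\<in>D. c a *\<^sub>R a) \<in> span D"
  by (intro span_sum span_scale span_base)

lemma nonneg_span: "nonneg_comb D b \<Longrightarrow> b \<in> span D"
  unfolding nonneg_comb_def using comb_span by auto

lemma spanD: "span D = UNIV"
proof -
  have "R \<subseteq> span D"
  proof
    fix b assume "b \<in> R"
    then consider "nonneg_comb D b" | "nonneg_comb D (- b)" using posneg by blast
    then show "b \<in> span D"
    proof cases
      case 2
      then have "- b \<in> span D" by (rule nonneg_span)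
      then have "- (- b) \<in> span D" by (rule span_neg)
      then show ?thesis by simp
    qed (rule nonneg_span)
  qed
  then have "span R \<subseteq> span D" by (simp add: span_minimal)
  then show ?thesis using spanR by auto
qed

definition coef :: "'a \<Rightarrow> 'a \<Rightarrow> real" where
  "coef x d = representation D x d"

definition ht :: "'a \<Rightarrow> real" where
  "ht x = (\<Sum>d\<in>D. coef x d)"

lemma inspan[simp]: "x \<in> span D" using spanD by auto

lemma coef_add: "coef (x + y) d = coef x d + coef y d"
  unfolding coef_def by (simp add: representation_add indD)
lemma coef_diff: "coef (x - y) d = coef x d - coef y d"
  unfolding coef_def by (simp add: representation_diff indD)
lemma coef_scale: "coef (r *\<^sub>R x) d = r * coef x d"
  unfolding coef_def by (simp add: representation_scale indD)
lemma coef_neg: "coef (- x) d = - coef x d"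
  unfolding coef_def by (simp add: representation_neg indD)
lemma coef_zero: "coef 0 d = 0"
  unfolding coef_def by (simp add: representation_zero)
lemma coef_basis: "a \<in> D \<Longrightarrow> coef a d = (if d = a then 1 else 0)"
  unfolding coef_def by (simp add: representation_basis indD)

lemma coef_comb: "d \<in> D \<Longrightarrow> coef (\<Sum>a\<in>D. c a *\<^sub>R a) d = c d"
proof -
  assume d: "d \<in> D"
  have "coef (\<Sum>a\<in>D. c a *\<^sub>R a) d = (\<Sum>a\<in>D. c a * coef a d)"
    unfolding coef_def by (simp add: representation_sum indD representation_scale)
  also have "\<dots> = (\<Sum>a\<in>D. if a = d then c a else 0)"
    by (intro sum.cong) (auto simp: coef_basis)
  also have "\<dots> = c d" using d finD by simp
  finally show ?thesis .
qed

lemma coef_out: "d \<notin> D \<Longrightarrow> coef x d = 0"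
  unfolding coef_def using representation_ne_zero by blast

lemma expand: "x = (\<Sum>d\<in>D. coef x d *\<^sub>R d)"
  unfolding coef_def by (simp add: sum_representation_eq indD finD)

lemma coef_eqI: "(\<And>d. d \<in> D \<Longrightarrow> coef x d = coef y d) \<Longrightarrow> x = y"
proof -
  assume h: "\<And>d. d \<in> D \<Longrightarrow> coef x d = coef y d"
  have "x = (\<Sum>d\<in>D. coef x d *\<^sub>R d)" by (rule expand)
  also have "\<dots> = (\<Sum>d\<in>D. coef y d *\<^sub>R d)" by (intro sum.cong) (auto simp: h)
  also have "\<dots> = y" by (rule expand[symmetric])
  finally show ?thesis .
qed

lemma ht_add: "ht (x + y) = ht x + ht y"
  by (simp add: ht_def coef_add sum.distrib)
lemma ht_diff: "ht (x - y) = ht x - ht y"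
  by (simp add: ht_def coef_diff sum_subtractf)
lemma ht_scale: "ht (r *\<^sub>R x) = r * ht x"
  by (simp add: ht_def coef_scale sum_distrib_left)
lemma ht_neg: "ht (- x) = - ht x"
  by (simp add: ht_def coef_neg sum_negf)
lemma ht_basis: "a \<in> D \<Longrightarrow> ht a = 1"
  using finD by (simp add: ht_def coef_basis)

abbreviation pos :: "'a \<Rightarrow> bool" where "pos x \<equiv> nonneg_comb D x"

lemma pos_coef: "pos x \<longleftrightarrow> (\<forall>d\<in>D. \<exists>n::nat. coef x d = real n)"
proof
  assume "pos x"
  then obtain c :: "'a \<Rightarrow> nat" where "x = (\<Sum>a\<in>D. real (c a) *\<^sub>R a)" unfolding nonneg_comb_def by blast
  then show "\<forall>d\<in>D. \<exists>n::nat. coef x d = real n" using coef_comb by auto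
next
  assume "\<forall>d\<in>D. \<exists>n::nat. coef x d = real n"
  then obtain c where c: "\<And>d. d \<in> D \<Longrightarrow> coef x d = real (c d)" by metis
  have "x = (\<Sum>a\<in>D. real (c a) *\<^sub>R a)"
    by (subst expand) (intro sum.cong, auto simp: c)
  then show "pos x" unfolding nonneg_comb_def by blast
qed

lemma pos_coef_ge: "pos x \<Longrightarrow> d \<in> D \<Longrightarrow> coef x d \<ge> 0"
  using pos_coef by fastforce

lemma pos_ht_nat: "pos x \<Longrightarrow> \<exists>n::nat. ht x = real n"
proof -
  assume "pos x"
  then obtain c where c: "\<And>d. d \<in> D \<Longrightarrow> coef x d = real (c d)" using pos_coef by metis
  have "ht x = real (\<Sum>d\<in>D. c d)" by (simp add: ht_def c)
  then show ?thesis by blast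
qed

lemma pos_ht_ge: "pos x \<Longrightarrow> ht x \<ge> 0"
  unfolding ht_def by (intro sum_nonneg pos_coef_ge)

lemma pos_neg_zero: "pos x \<Longrightarrow> pos (- x) \<Longrightarrow> x = 0"
proof -
  assume a: "pos x" "pos (- x)"
  have "\<And>d. d \<in> D \<Longrightarrow> coef x d = coef 0 d"
    using pos_coef_ge[OF a(1)] pos_coef_ge[OF a(2)] by (force simp: coef_neg coef_zero)
  then show ?thesis by (rule coef_eqI)
qed

lemma root_nz: "b \<in> R \<Longrightarrow> b \<noteq> 0" using zR by auto

lemma neg_root: "b \<in> R \<Longrightarrow> \<not> pos b \<Longrightarrow> pos (- b)" using posneg by blast

lemma pos_ht_pos: "b \<in> R \<Longrightarrow> pos b \<Longrightarrow> ht b > 0"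
proof -
  assume b: "b \<in> R" "pos b"
  have "ht b \<noteq> 0"
  proof
    assume "ht b = 0"
    then have "\<forall>d\<in>D. coef b d = 0"
      using sum_nonneg_eq_0_iff[OF finD, of "coef b"] pos_coef_ge[OF b(2)] unfolding ht_def by auto
    then have "b = 0" by (intro coef_eqI) (auto simp: coef_zero)
    then show False using b root_nz by auto
  qed
  then show ?thesis using pos_ht_ge[OF b(2)] by auto
qed

lemma refl_pos:
  assumes a: "a \<in> D" and b: "b \<in> R" "pos b" and ne: "b \<noteq> a"
  shows "pos (reflection a b)"
proof (rule ccontr)
  assume np: "\<not> pos (reflection a b)"
  have aR: "a \<in> R" using a DR by auto
  have rR: "reflection a b \<in> R" using reflR[OF aR b(1)] .
  have pn: "pos (- reflection a b)" using neg_root[OF rR np] .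
  have z: "coef b d = 0" if d: "d \<in> D" "d \<noteq> a" for d
  proof -
    have "coef (- reflection a b) d = - coef b d"
      using d a by (simp add: reflection_coroot coef_neg coef_diff coef_scale coef_basis)
    then show ?thesis using pos_coef_ge[OF pn d(1)] pos_coef_ge[OF b(2) d(1)] by simp
  qed
  have "b = coef b a *\<^sub>R a"
    by (rule coef_eqI) (auto simp: coef_scale coef_basis a z)
  then have "coef b a = 1 \<or> coef b a = -1" using redR[OF aR] b(1) by metis
  moreover have "coef b a \<ge> 0" using pos_coef_ge[OF b(2) a] .
  ultimately have "b = a" using \<open>b = coef b a *\<^sub>R a\<close> by auto
  then show False using ne by simp
qed

lemma sw_R: "set xs \<subseteq> D \<Longrightarrow> b \<in> R \<Longrightarrow> simple_word xs b \<in> R"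
proof (induction xs)
  case (Cons a xs)
  then have "a \<in> R" "simple_word xs b \<in> R" using DR by auto
  then show ?case by (simp add: reflR)
qed simp

end


lemma wlen_le: "set xs \<subseteq> D \<Longrightarrow> wlen D (simple_word xs) \<le> length xs"
  unfolding wlen_def by (rule Least_le) blast

lemma wlen_ex: "w \<in> weyl D \<Longrightarrow> \<exists>xs. set xs \<subseteq> D \<and> length xs = wlen D w \<and> simple_word xs = w"
  unfolding wlen_def weyl_def by (rule LeastI_ex) blast

lemma weyl_sw: "set xs \<subseteq> D \<Longrightarrow> simple_word xs \<in> weyl D"
  unfolding weyl_def by blast

lemma weyl_comp: "w \<in> weyl D \<Longrightarrow> v \<in> weyl D \<Longrightarrow> w \<circ> v \<in> weyl D"
proof -
  assume "w \<in> weyl D" "v \<in> weyl D"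
  then obtain xs ys where "set xs \<subseteq> D" "set ys \<subseteq> D" "w = simple_word xs" "v = simple_word ys"
    unfolding weyl_def by blast
  then have "w \<circ> v = simple_word (xs @ ys)" "set (xs @ ys) \<subseteq> D" by (auto simp: sw_append)
  then show ?thesis unfolding weyl_def by blast
qed

lemma WP_weyl: "v \<in> WP D ai \<Longrightarrow> v \<in> weyl D"
  unfolding WP_def weyl_def by blast

lemma WP_comp: "w \<in> WP D ai \<Longrightarrow> v \<in> WP D ai \<Longrightarrow> w \<circ> v \<in> WP D ai"
proof -
  assume "w \<in> WP D ai" "v \<in> WP D ai"
  then obtain xs ys where "set xs \<subseteq> D - {ai}" "set ys \<subseteq> D - {ai}" "w = simple_word xs" "v = simple_word ys"
    unfolding WP_def by blast
  then have "w \<circ> v = simple_word (xs @ ys)" "set (xs @ ys) \<subseteq> D - {ai}" by (auto simp: sw_append)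
  then show ?thesis unfolding WP_def by blast
qed

lemma wlen_Cons: "w \<in> weyl D \<Longrightarrow> a \<in> D \<Longrightarrow> wlen D (reflection a \<circ> w) \<le> wlen D w + 1"
proof -
  assume w: "w \<in> weyl D" and a: "a \<in> D"
  obtain xs where xs: "set xs \<subseteq> D" "length xs = wlen D w" "simple_word xs = w" using wlen_ex[OF w] by blast
  have "wlen D (simple_word (a # xs)) \<le> length (a # xs)" using xs a by (intro wlen_le) auto
  then show ?thesis using xs by simp
qed

lemma sw_rev_eq: "simple_word zs = simple_word ys \<circ> reflection a \<Longrightarrow>
   simple_word (rev zs) = reflection a \<circ> simple_word (rev ys)"
proof
  fix x assume h: "simple_word zs = simple_word ys \<circ> reflection a"
  have "simple_word (rev zs) x = simple_word (rev zs) (simple_word zs (reflection a (simple_word (rev ys) x)))"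
    by (simp add: h)
  then show "simple_word (rev zs) x = (reflection a \<circ> simple_word (rev ys)) x" by simp
qed

context rs
begin

lemma pos_D: "a \<in> D \<Longrightarrow> pos a"
  by (auto simp: pos_coef coef_basis intro: exI[where x=1] exI[where x=0])

lemma deletion:
  "set xs \<subseteq> D \<Longrightarrow> a \<in> D \<Longrightarrow> \<not> pos (simple_word xs a) \<Longrightarrow>
    \<exists>ys. set ys \<subseteq> D \<and> length ys < length xs \<and> simple_word ys = simple_word xs \<circ> reflection a"
proof (induction xs)
  case Nil
  then show ?case using pos_D by simp
next
  case (Cons b xs)
  show ?case
  proof (cases "pos (simple_word xs a)")
    case False
    with Cons.IH Cons.prems obtain ys where "set ys \<subseteq> D" "length ys < length xs" "simple_word ys = simple_word xs \<circ> reflection a"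
      by (meson dual_order.trans set_subset_Cons)
    then show ?thesis using Cons.prems by (intro exI[where x="b # ys"]) auto
  next
    case True
    have R: "simple_word xs a \<in> R" using Cons.prems DR by (intro sw_R) auto
    have eq: "simple_word xs a = b"
    proof (rule ccontr)
      assume "simple_word xs a \<noteq> b"
      then have "pos (reflection b (simple_word xs a))" using refl_pos[OF _ R True] Cons.prems by auto
      then show False using Cons.prems by simp
    qed
    have h: "simple_word (b # xs) \<circ> reflection a = simple_word xs"
    proof
      fix x
      have "reflection b (simple_word xs (reflection a x)) = simple_word xs (reflection a (reflection a x))"
        using sw_refl_conj[of xs a "reflection a x"] eq by simp
      then show "(simple_word (b # xs) \<circ> reflection a) x = simple_word xs x" by simp
    qed
    have "set xs \<subseteq> D" "length xs < length (b # xs)" using Cons.prems by auto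
    with h show ?thesis by metis
  qed
qed

lemma deletion_left:
  assumes "set xs \<subseteq> D" "a \<in> D" "\<not> pos (simple_word (rev xs) a)"
  shows "\<exists>zs. set zs \<subseteq> D \<and> length zs < length xs \<and> simple_word zs = reflection a \<circ> simple_word xs"
proof -
  obtain ys where ys: "set ys \<subseteq> D" "length ys < length (rev xs)" "simple_word ys = simple_word (rev xs) \<circ> reflection a"
    using deletion[of "rev xs" a] assms by auto
  have "simple_word (rev ys) = reflection a \<circ> simple_word (rev (rev xs))" by (rule sw_rev_eq[OF ys(3)])
  then show ?thesis using ys by (intro exI[where x="rev ys"]) auto
qed

end

locale mrs = rs +
  fixes ai lam :: 'a
  assumes aiD: "ai \<in> D" and mini: "minuscule R D ai lam"
begin

lemma fw: "b \<in> D \<Longrightarrow> lam \<bullet> coroot b = (if b = ai then 1 else 0)"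
  using mini unfolding minuscule_def fund_weight_def by auto

lemma mpos: "b \<in> R \<Longrightarrow> pos b \<Longrightarrow> lam \<bullet> coroot b \<le> 1"
  using mini unfolding minuscule_def pos_roots_def by auto

lemma dom: "b \<in> R \<Longrightarrow> pos b \<Longrightarrow> lam \<bullet> coroot b \<ge> 0"
proof -
  assume b: "b \<in> R" "pos b"
  have ld: "lam \<bullet> d \<ge> 0" if "d \<in> D" for d
  proof -
    have "d \<noteq> 0" using that DR root_nz by auto
    then have "d \<bullet> d > 0" by simp
    moreover have "2 * (lam \<bullet> d) / (d \<bullet> d) \<ge> 0" using fw[OF that] by (simp add: coroot_inner)
    ultimately show ?thesis by (simp add: zero_le_divide_iff) (use \<open>d \<bullet> d > 0\<close> in linarith)
  qed
  have "lam \<bullet> b = lam \<bullet> (\<Sum>d\<in>D. coef b d *\<^sub>R d)" by (subst expand) simp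
  also have "\<dots> = (\<Sum>d\<in>D. coef b d * (lam \<bullet> d))" by (simp add: inner_sum_right)
  also have "\<dots> \<ge> 0" by (intro sum_nonneg mult_nonneg_nonneg pos_coef_ge[OF b(2)] ld)
  finally have "lam \<bullet> b \<ge> 0" .
  moreover have "b \<bullet> b > 0" using root_nz[OF b(1)] by simp
  ultimately show ?thesis by (simp add: coroot_inner)
qed

lemma lam_bound: "b \<in> R \<Longrightarrow> -1 \<le> lam \<bullet> coroot b \<and> lam \<bullet> coroot b \<le> 1"
proof -
  assume b: "b \<in> R"
  show ?thesis
  proof (cases "pos b")
    case True then show ?thesis using dom[OF b] mpos[OF b] by auto
  next
    case False
    then have p: "pos (- b)" using neg_root[OF b] by auto
    have "- b \<in> R" using reflR[OF b b] reflection_self[OF root_nz[OF b]] by simp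
    then show ?thesis using dom[OF _ p] mpos[OF _ p] by (auto simp: coroot_neg)
  qed
qed

lemma lam_neg: "b \<in> R \<Longrightarrow> lam \<bullet> coroot b < 0 \<Longrightarrow> \<not> pos b"
  using dom by force

lemma orb_pair: "simple_word xs lam \<bullet> coroot b = lam \<bullet> coroot (simple_word (rev xs) b)"
  by (simp add: sw_adj sw_coroot)

lemma orb_bound: "set xs \<subseteq> D \<Longrightarrow> b \<in> R \<Longrightarrow>
   -1 \<le> simple_word xs lam \<bullet> coroot b \<and> simple_word xs lam \<bullet> coroot b \<le> 1"
  unfolding orb_pair by (intro lam_bound sw_R) auto

lemma orb_int: "set xs \<subseteq> D \<Longrightarrow> a \<in> D \<Longrightarrow> simple_word xs lam \<bullet> coroot a \<in> \<int>"
proof (induction xs arbitrary: a)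
  case Nil
  then show ?case using fw[of a] by simp
next
  case (Cons b xs)
  have "simple_word (b # xs) lam \<bullet> coroot a =
     simple_word xs lam \<bullet> coroot a - (simple_word xs lam \<bullet> coroot b) * (b \<bullet> coroot a)"
    by (simp add: reflection_coroot inner_diff_left)
  moreover have "b \<bullet> coroot a \<in> \<int>" using Cons.prems DR by (intro intR) auto
  ultimately show ?case using Cons by auto
qed

lemma ht_refl: "ht (lam - reflection a mu) = ht (lam - mu) + (mu \<bullet> coroot a) * ht a"
  by (simp add: reflection_coroot ht_diff ht_add ht_scale)

lemma refl_pair_self: "a \<noteq> 0 \<Longrightarrow> reflection a mu \<bullet> coroot a = - (mu \<bullet> coroot a)"
  by (simp add: reflection_coroot inner_diff_left coroot_inner)

lemma ht_lb: "set xs \<subseteq> D \<Longrightarrow> ht (lam - simple_word xs lam) \<le> length xs"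
proof (induction xs)
  case Nil then show ?case by (simp add: ht_def coef_zero)
next
  case (Cons b xs)
  have "ht (lam - simple_word (b # xs) lam) = ht (lam - simple_word xs lam) + simple_word xs lam \<bullet> coroot b"
    using Cons.prems by (simp add: ht_refl ht_basis)
  moreover have "simple_word xs lam \<bullet> coroot b \<le> 1" using orb_bound[of xs b] Cons.prems DR by auto
  ultimately show ?case using Cons by auto
qed

lemma wlen_lb: "w \<in> weyl D \<Longrightarrow> ht (lam - w lam) \<le> wlen D w"
  using wlen_ex ht_lb by metis

lemma WP_fix: "set xs \<subseteq> D - {ai} \<Longrightarrow> simple_word xs lam = lam"
proof (induction xs)
  case (Cons b xs)
  then have "lam \<bullet> coroot b = 0" using fw[of b] by auto
  with Cons show ?case by (simp add: reflection_coroot)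
qed simp

lemma WP_fix': "v \<in> WP D ai \<Longrightarrow> v lam = lam"
  unfolding WP_def using WP_fix by auto

end


context rs begin
lemma negR: "b \<in> R \<Longrightarrow> - b \<in> R"
  using reflR[of b b] reflection_self[OF root_nz] by auto

lemma ht_zero: "ht 0 = 0" by (simp add: ht_def coef_zero)
end

lemma id_WP: "id \<in> WP D ai"
  unfolding WP_def by (auto intro!: exI[where x="[]"])

context mrs begin

lemma stab: "w \<in> weyl D \<Longrightarrow> w lam = lam \<Longrightarrow> w \<in> WP D ai"
proof (induction "wlen D w" arbitrary: w rule: less_induct)
  case less
  obtain xs where xs: "set xs \<subseteq> D" "length xs = wlen D w" "simple_word xs = w"
    using wlen_ex[OF less.prems(1)] by blast
  show ?case
  proof (cases xs rule: rev_cases)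
    case Nil
    then show ?thesis using xs id_WP by simp
  next
    case (snoc ys a)
    have ys: "set ys \<subseteq> D" and a: "a \<in> D" using xs snoc by auto
    have wdef: "w = simple_word ys \<circ> reflection a" using xs snoc by (simp add: sw_append)
    have aR: "a \<in> R" using a DR by auto
    have wR: "w a \<in> R" using sw_R[OF xs(1) aR] xs by simp
    have np: "\<not> pos (w a)"
    proof
      assume p: "pos (w a)"
      have "w a = simple_word ys (- a)" using wdef reflection_self[OF root_nz[OF aR]] by simp
      then have e: "simple_word ys a = - w a" using sw_neg[of ys a] by simp
      have "\<not> pos (simple_word ys a)"
      proof
        assume "pos (simple_word ys a)"
        then have "w a = 0" using pos_neg_zero[OF p] e by simp
        then show False using wR root_nz by simp
      qed
      then obtain zs where zs: "set zs \<subseteq> D" "length zs < length ys" "simple_word zs = simple_word ys \<circ> reflection a"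
        using deletion[OF ys a] by blast
      have "simple_word zs = w" using zs(3) wdef by simp
      then have "wlen D w \<le> length zs" using wlen_le[OF zs(1)] by simp
      then show False using zs(2) xs(2) snoc by simp
    qed
    have "lam \<bullet> coroot a = lam \<bullet> coroot (w a)"
      using sw_inner[of xs lam "coroot a"] sw_coroot[of xs a] xs less.prems(2) by simp
    also have "\<dots> \<le> 0"
      using dom[OF negR[OF wR] neg_root[OF wR np]] by (simp add: coroot_neg)
    finally have "a \<noteq> ai" using fw[OF a] by auto
    then have aP: "a \<in> D - {ai}" using a by simp
    then have fx: "reflection a lam = lam" using fw[OF a] by (simp add: reflection_coroot)
    have ysl: "simple_word ys lam = lam" using wdef fx less.prems(2) by simp
    have "wlen D (simple_word ys) < wlen D w"
      using wlen_le[OF ys] xs snoc by simp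
    then have "simple_word ys \<in> WP D ai" using less.hyps[OF _ weyl_sw[OF ys] ysl] by simp
    moreover have "reflection a \<in> WP D ai" using aP unfolding WP_def
      by (auto intro!: exI[where x="[a]"])
    ultimately show ?thesis using wdef WP_comp by simp
  qed
qed

end

context mrs begin
lemma WupP_weyl: "u \<in> WupP D ai \<Longrightarrow> u \<in> weyl D" unfolding WupP_def by simp
lemma WupP_min: "u \<in> WupP D ai \<Longrightarrow> v \<in> WP D ai \<Longrightarrow> wlen D u \<le> wlen D (u \<circ> v)"
  unfolding WupP_def by simp

lemma tight: "u \<in> WupP D ai \<Longrightarrow> real (wlen D u) = ht (lam - u lam)"
proof (induction "wlen D u" arbitrary: u rule: less_induct)
  case less
  have uW: "u \<in> weyl D" using WupP_weyl[OF less.prems] .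
  obtain xs where xs: "set xs \<subseteq> D" "length xs = wlen D u" "simple_word xs = u"
    using wlen_ex[OF uW] by blast
  show ?case
  proof (cases xs)
    case Nil
    then show ?thesis using xs by (simp add: ht_zero)
  next
    case (Cons a xs')
    define u1 where "u1 = simple_word xs'"
    have a: "a \<in> D" and xs': "set xs' \<subseteq> D" using xs Cons by auto
    have udef: "u = reflection a \<circ> u1" using xs Cons u1_def by simp
    have u1W: "u1 \<in> weyl D" using weyl_sw[OF xs'] u1_def by simp
    have l1: "wlen D u1 \<le> wlen D u - 1" using wlen_le[OF xs'] xs Cons u1_def by simp
    have l2: "wlen D u \<le> wlen D u1 + 1" using wlen_Cons[OF u1W a] udef by simp
    have pos_len: "wlen D u > 0" using xs Cons by simp
    have eq1: "wlen D u1 = wlen D u - 1" using l1 l2 by simp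
    have u1P: "u1 \<in> WupP D ai"
      unfolding WupP_def
    proof (intro CollectI conjI ballI u1W)
      fix v assume v: "v \<in> WP D ai"
      have "wlen D u \<le> wlen D (u \<circ> v)" using WupP_min[OF less.prems v] .
      also have "\<dots> = wlen D (reflection a \<circ> (u1 \<circ> v))" using udef by (simp add: o_assoc)
      also have "\<dots> \<le> wlen D (u1 \<circ> v) + 1" using wlen_Cons[OF weyl_comp[OF u1W WP_weyl[OF v]] a] .
      finally show "wlen D u1 \<le> wlen D (u1 \<circ> v)" using eq1 pos_len by simp
    qed
    have IH: "real (wlen D u1) = ht (lam - u1 lam)"
      using less.hyps[OF _ u1P] eq1 pos_len by simp
    define k where "k = u1 lam \<bullet> coroot a"
    have hte: "ht (lam - u lam) = ht (lam - u1 lam) + k"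
      using udef by (simp add: ht_refl ht_basis a k_def)
    have kint: "k \<in> \<int>" using orb_int[OF xs' a] u1_def k_def by simp
    have kb: "-1 \<le> k \<and> k \<le> 1" using orb_bound[OF xs'] a DR u1_def k_def by auto
    have kge: "k \<ge> 0"
    proof (rule ccontr)
      assume "\<not> k \<ge> 0"
      then have "lam \<bullet> coroot (simple_word (rev xs') a) < 0" using orb_pair k_def u1_def by simp
      then have "\<not> pos (simple_word (rev xs') a)" using lam_neg sw_R[of "rev xs'" a] xs' a DR by auto
      then obtain zs where zs: "set zs \<subseteq> D" "length zs < length xs'" "simple_word zs = reflection a \<circ> simple_word xs'"
        using deletion_left[OF xs' a] by blast
      have "wlen D u \<le> length zs" using wlen_le[OF zs(1)] zs(3) udef u1_def by simp
      then show False using zs(2) xs Cons by simp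
    qed
    have kne: "k \<noteq> 0"
    proof
      assume k0: "k = 0"
      define g where "g = simple_word (rev xs' @ a # xs')"
      have gW: "g \<in> weyl D" unfolding g_def using xs' a by (intro weyl_sw) auto
      have gdef: "g = simple_word (rev xs') \<circ> reflection a \<circ> u1" unfolding g_def u1_def by (simp add: sw_append o_assoc)
      have "reflection a (u1 lam) = u1 lam" using k0 k_def by (simp add: reflection_coroot)
      then have "g lam = lam" using gdef u1_def by simp
      then have gP: "g \<in> WP D ai" using stab[OF gW] by simp
      have "u \<circ> g = u1"
      proof
        fix x show "(u \<circ> g) x = u1 x" using udef gdef u1_def by simp
      qed
      then have "wlen D u \<le> wlen D u1" using WupP_min[OF less.prems gP] by simp
      then show False using eq1 pos_len by simp
    qed
    obtain m where m: "k = of_int m" using kint Ints_cases by blast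
    have "m = 1" using kge kne kb m by auto
    then have "k = 1" using m by simp
    then show ?thesis using hte IH eq1 pos_len by simp
  qed
qed

end

context mrs begin
lemma tight_unique:
  "set xs \<subseteq> D \<Longrightarrow> set ys \<subseteq> D \<Longrightarrow> real (length xs) = ht (lam - simple_word xs lam) \<Longrightarrow>
   real (length ys) = ht (lam - simple_word ys lam) \<Longrightarrow> simple_word xs lam = simple_word ys lam \<Longrightarrow>
   simple_word xs = simple_word ys"
proof (induction xs arbitrary: ys)
  case Nil
  then have "length ys = 0" by (simp add: ht_zero)
  then show ?case by simp
next
  case (Cons a xs)
  have a: "a \<in> D" and xs: "set xs \<subseteq> D" using Cons.prems by auto
  have aR: "a \<in> R" using a DR by auto
  define mu' where "mu' = simple_word xs lam"
  have e1: "ht (lam - simple_word (a # xs) lam) = ht (lam - mu') + mu' \<bullet> coroot a"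
    by (simp add: ht_refl ht_basis a mu'_def)
  have b1: "ht (lam - mu') \<le> length xs" using ht_lb[OF xs] mu'_def by simp
  have b2: "mu' \<bullet> coroot a \<le> 1" using orb_bound[OF xs aR] mu'_def by simp
  have p3: "real (length xs) + 1 = ht (lam - mu') + mu' \<bullet> coroot a"
    using Cons.prems(3) e1 by simp
  have c1: "ht (lam - mu') = length xs" and c2: "mu' \<bullet> coroot a = 1"
    using p3 b1 b2 by linarith+
  have y: "simple_word ys lam = reflection a mu'" using Cons.prems(5) mu'_def by simp
  have "simple_word ys lam \<bullet> coroot a = -1"
    unfolding y refl_pair_self[OF root_nz[OF aR], of mu'] c2 by simp
  then have "lam \<bullet> coroot (simple_word (rev ys) a) < 0" using orb_pair[of ys a] by simp
  moreover have "simple_word (rev ys) a \<in> R" using Cons.prems(2) aR by (intro sw_R) auto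
  ultimately have "\<not> pos (simple_word (rev ys) a)" using lam_neg by blast
  then obtain zs where zs: "set zs \<subseteq> D" "length zs < length ys" "simple_word zs = reflection a \<circ> simple_word ys"
    using deletion_left[OF Cons.prems(2) a] by blast
  have zl: "simple_word zs lam = mu'" using zs(3) y by simp
  have "ht (lam - mu') \<le> length zs" using ht_lb[OF zs(1)] zl by simp
  moreover have "real (length ys) = length xs + 1" using Cons.prems(3,4,5) by simp
  ultimately have "real (length zs) = ht (lam - simple_word zs lam)" using zs(2) c1 zl by simp
  moreover have "real (length xs) = ht (lam - simple_word xs lam)" using c1 mu'_def by simp
  moreover have "simple_word xs lam = simple_word zs lam" using zl mu'_def by simp
  ultimately have e: "simple_word xs = simple_word zs"
    using Cons.IH[OF xs zs(1)] by blast
  show ?case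
  proof
    fix x
    have "simple_word (a # xs) x = reflection a (simple_word zs x)" using e by simp
    also have "\<dots> = simple_word ys x" using zs(3) by simp
    finally show "simple_word (a # xs) x = simple_word ys x" .
  qed
qed

lemma lenP_formula:
  assumes wW: "w \<in> weyl D"
  shows "real (lenP D ai w) = ht (lam - w lam)"
proof -
  define P where "P u \<longleftrightarrow> u \<in> WupP D ai \<and> (\<exists>v\<in>WP D ai. w = u \<circ> v)" for u
  obtain v0 where v0: "v0 \<in> WP D ai" "\<forall>y. y \<in> WP D ai \<longrightarrow> wlen D (w \<circ> v0) \<le> wlen D (w \<circ> y)"
    using ex_has_least_nat[of "\<lambda>v. v \<in> WP D ai" id "\<lambda>v. wlen D (w \<circ> v)"] id_WP by blast
  define u0 where "u0 = w \<circ> v0"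
  have u0W: "u0 \<in> WupP D ai"
    unfolding WupP_def
  proof (intro CollectI conjI ballI)
    show "u0 \<in> weyl D" unfolding u0_def using weyl_comp[OF wW WP_weyl[OF v0(1)]] .
    fix v assume "v \<in> WP D ai"
    then have vv: "v0 \<circ> v \<in> WP D ai" using WP_comp v0(1) by blast
    show "wlen D u0 \<le> wlen D (u0 \<circ> v)" using v0(2)[rule_format, OF vv] unfolding u0_def by (simp add: o_assoc)
  qed
  obtain zs where zs: "set zs \<subseteq> D - {ai}" "v0 = simple_word zs" using v0(1) unfolding WP_def by blast
  have "simple_word (rev zs) \<in> WP D ai" using zs unfolding WP_def by (auto intro!: exI[where x="rev zs"])
  moreover have "w = u0 \<circ> simple_word (rev zs)" unfolding u0_def zs(2) by (simp add: o_assoc[symmetric])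
  ultimately have P0: "P u0" using u0W unfolding P_def by blast
  have lam_eq: "u lam = w lam" if "P u" for u
    using that WP_fix' unfolding P_def by (metis comp_apply)
  have uniq: "u = u0" if "P u" for u
  proof -
    have uW: "u \<in> WupP D ai" using that P_def by simp
    obtain xs where xs: "set xs \<subseteq> D" "length xs = wlen D u" "simple_word xs = u"
      using wlen_ex[OF WupP_weyl[OF uW]] by blast
    obtain ys where ys: "set ys \<subseteq> D" "length ys = wlen D u0" "simple_word ys = u0"
      using wlen_ex[OF WupP_weyl[OF u0W]] by blast
    have t1: "real (length xs) = ht (lam - simple_word xs lam)" using tight[OF uW] xs(2,3) by simp
    have t2: "real (length ys) = ht (lam - simple_word ys lam)" using tight[OF u0W] ys(2,3) by simp
    have e: "simple_word xs lam = simple_word ys lam" using lam_eq[OF that] lam_eq[OF P0] xs(3) ys(3) by simp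
    have "simple_word xs = simple_word ys" by (rule tight_unique[OF xs(1) ys(1) t1 t2 e])
    then show ?thesis using xs(3) ys(3) by simp
  qed
  have "(THE u. P u) = u0" using P0 uniq by (rule the_equality)
  then have "lenP D ai w = wlen D u0" unfolding lenP_def P_def by simp
  then show ?thesis using tight[OF u0W] lam_eq[OF P0] by simp
qed

end


context rs begin

lemma pos_ht_zero: "pos x \<Longrightarrow> ht x = 0 \<Longrightarrow> x = 0"
proof -
  assume b: "pos x" "ht x = 0"
  then have "\<forall>d\<in>D. coef x d = 0"
    using sum_nonneg_eq_0_iff[OF finD, of "coef x"] pos_coef_ge[OF b(1)] unfolding ht_def by auto
  then show "x = 0" by (intro coef_eqI) (auto simp: coef_zero)
qed

lemma conj_simple_aux:
  "\<forall>b. b \<in> R \<longrightarrow> pos b \<longrightarrow> ht b = real n \<longrightarrow> (\<exists>xs a. set xs \<subseteq> D \<and> a \<in> D \<and> b = simple_word xs a)"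
proof (induction n rule: less_induct)
  case (less n)
  show ?case
  proof (intro allI impI)
    fix b assume bR: "b \<in> R" and bp: "pos b" and bh: "ht b = real n"
    show "\<exists>xs a. set xs \<subseteq> D \<and> a \<in> D \<and> b = simple_word xs a"
    proof (cases "b \<in> D")
      case True
      then show ?thesis by (intro exI[where x="[]"] exI[where x=b]) auto
    next
      case False
      have "\<exists>d\<in>D. b \<bullet> d > 0"
      proof (rule ccontr)
        assume "\<not> (\<exists>d\<in>D. b \<bullet> d > 0)"
        then have le: "\<And>d. d \<in> D \<Longrightarrow> b \<bullet> d \<le> 0" by auto
        have "b \<bullet> b = b \<bullet> (\<Sum>d\<in>D. coef b d *\<^sub>R d)" by (subst (2) expand) simp
        also have "\<dots> = (\<Sum>d\<in>D. coef b d * (b \<bullet> d))" by (simp add: inner_sum_right)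
        also have "\<dots> \<le> 0" by (intro sum_nonpos mult_nonneg_nonpos pos_coef_ge[OF bp] le)
        finally have "b \<bullet> b \<le> 0" .
        then show False using root_nz[OF bR] by (metis inner_gt_zero_iff not_le)
      qed
      then obtain d where d: "d \<in> D" "b \<bullet> d > 0" by blast
      have dR: "d \<in> R" using d DR by auto
      have "d \<bullet> d > 0" using root_nz[OF dR] by simp
      then have k: "b \<bullet> coroot d > 0" using d by (simp add: coroot_inner)
      define b' where "b' = reflection d b"
      have b'R: "b' \<in> R" using reflR[OF dR bR] b'_def by simp
      have b'p: "pos b'" using refl_pos[OF d(1) bR bp] False d b'_def by auto
      have htb': "ht b' = ht b - b \<bullet> coroot d"
        unfolding b'_def reflection_coroot by (simp add: ht_diff ht_scale ht_basis d)
      obtain n' where n': "ht b' = real n'" using pos_ht_nat[OF b'p] by blast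
      have "n' < n" using htb' n' bh k by simp
      then obtain xs a where xa: "set xs \<subseteq> D" "a \<in> D" "b' = simple_word xs a"
        using less.IH b'R b'p n' by blast
      have "b = reflection d b'" unfolding b'_def by simp
      then have "b = simple_word (d # xs) a" using xa by simp
      then show ?thesis using xa d by (intro exI[where x="d # xs"] exI[where x=a]) auto
    qed
  qed
qed

lemma conj_simple: "b \<in> R \<Longrightarrow> pos b \<Longrightarrow> \<exists>xs a. set xs \<subseteq> D \<and> a \<in> D \<and> b = simple_word xs a"
  using conj_simple_aux pos_ht_nat by blast

lemma refl_weyl: "b \<in> R \<Longrightarrow> pos b \<Longrightarrow> reflection b \<in> weyl D"
proof -
  assume "b \<in> R" "pos b"
  then obtain xs a where xa: "set xs \<subseteq> D" "a \<in> D" "b = simple_word xs a" using conj_simple by blast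
  have "reflection b = simple_word (xs @ [a] @ rev xs)"
  proof
    fix x
    have "reflection b x = reflection (simple_word xs a) (simple_word xs (simple_word (rev xs) x))"
      using xa by simp
    also have "\<dots> = simple_word xs (reflection a (simple_word (rev xs) x))" by (rule sw_refl_conj)
    finally show "reflection b x = simple_word (xs @ [a] @ rev xs) x" by (simp add: sw_append)
  qed
  moreover have "set (xs @ [a] @ rev xs) \<subseteq> D" using xa by auto
  ultimately show ?thesis using weyl_sw by metis
qed

lemma ht_one: "b \<in> R \<Longrightarrow> pos b \<Longrightarrow> ht b = 1 \<Longrightarrow> b \<in> D"
proof -
  assume b: "b \<in> R" "pos b" "ht b = 1"
  obtain c where c: "\<And>d. d \<in> D \<Longrightarrow> coef b d = real (c d)" using pos_coef b(2) by metis
  have "real (\<Sum>d\<in>D. c d) = 1" using b(3) by (simp add: ht_def c)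
  then have "(\<Sum>d\<in>D. c d) = 1" by linarith
  then obtain d where d: "d \<in> D" "c d = 1" "\<forall>e\<in>D. d \<noteq> e \<longrightarrow> c e = 0"
    using sum_eq_1_iff[OF finD] by blast
  have "b = d"
    by (rule coef_eqI) (use d in \<open>auto simp: c coef_basis\<close>)
  then show ?thesis using d by simp
qed

lemma highest_pos:
  assumes "highest_root R D psi"
  shows "pos psi" and "real (height D psi) = ht psi"
proof -
  have psiR: "psi \<in> R" and hc: "\<And>b. b \<in> R \<Longrightarrow> pos (psi - b)" using assms unfolding highest_root_def by auto
  have "pos (psi - (- psi))" using hc[OF negR[OF psiR]] .
  then have ge: "coef psi d \<ge> 0" if "d \<in> D" for d
    using pos_coef_ge[OF _ that, of "psi - - psi"] by (simp add: coef_add)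
  show pp: "pos psi"
  proof (rule ccontr)
    assume "\<not> pos psi"
    then have pn: "pos (- psi)" using neg_root[OF psiR] by simp
    have "psi = 0"
    proof (rule coef_eqI)
      fix d assume "d \<in> D"
      then show "coef psi d = coef 0 d" using ge pos_coef_ge[OF pn] by (force simp: coef_neg coef_zero)
    qed
    then show False using root_nz[OF psiR] by simp
  qed
  obtain c0 where c0: "psi = (\<Sum>a\<in>D. real (c0 a) *\<^sub>R a)" using pp unfolding nonneg_comb_def by blast
  have "height D psi = (\<Sum>a\<in>D. c0 a)"
    unfolding height_def
  proof (rule the_equality)
    show "\<exists>c. psi = (\<Sum>a\<in>D. real (c a) *\<^sub>R a) \<and> (\<Sum>a\<in>D. c0 a) = (\<Sum>a\<in>D. c a)" using c0 by blast
    fix h assume "\<exists>c. psi = (\<Sum>a\<in>D. real (c a) *\<^sub>R a) \<and> h = (\<Sum>a\<in>D. c a)"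
    then obtain c where c: "psi = (\<Sum>a\<in>D. real (c a) *\<^sub>R a)" "h = (\<Sum>a\<in>D. c a)" by blast
    have "\<And>d. d \<in> D \<Longrightarrow> c d = c0 d"
    proof -
      fix d assume d: "d \<in> D"
      have "real (c d) = coef psi d" using coef_comb[OF d, of "\<lambda>a. real (c a)"] c(1) by simp
      also have "\<dots> = real (c0 d)" using coef_comb[OF d, of "\<lambda>a. real (c0 a)"] c0 by simp
      finally show "c d = c0 d" by simp
    qed
    then show "h = (\<Sum>a\<in>D. c0 a)" using c(2) by simp
  qed
  moreover have "ht psi = (\<Sum>a\<in>D. real (c0 a))"
    unfolding ht_def using coef_comb c0 by (metis (no_types, lifting) sum.cong)
  ultimately show "real (height D psi) = ht psi" by simp
qed

end

context mrs begin

lemma pair_int: "set ys \<subseteq> D \<Longrightarrow> b \<in> R \<Longrightarrow> pos b \<Longrightarrow> simple_word ys lam \<bullet> coroot b \<in> \<int>"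
proof -
  assume ys: "set ys \<subseteq> D" and "b \<in> R" "pos b"
  then obtain xs a where xa: "set xs \<subseteq> D" "a \<in> D" "b = simple_word xs a" using conj_simple by blast
  have "simple_word ys lam \<bullet> coroot b = simple_word ys lam \<bullet> simple_word xs (coroot a)"
    using xa by (simp add: sw_coroot)
  also have "\<dots> = simple_word (rev xs) (simple_word ys lam) \<bullet> coroot a"
    using sw_adj[of "rev xs" "simple_word ys lam" "coroot a"] by simp
  also have "\<dots> = simple_word (rev xs @ ys) lam \<bullet> coroot a" by (simp add: sw_append)
  finally show ?thesis using orb_int[of "rev xs @ ys" a] xa ys by simp
qed

lemma main:
  assumes psi: "highest_root R D psi" and u: "u \<in> WupP D ai" and al: "alpha \<in> pos_roots R D"
  shows "(lenP D ai (reflection alpha \<circ> u) = lenP D ai u + 1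
            \<longrightarrow> alpha \<in> D \<and> u lam \<bullet> coroot alpha = 1)
       \<and> (int (lenP D ai (reflection alpha \<circ> u))
              = int (lenP D ai u) - (int (coxeter_number D psi) - 1)
            \<longrightarrow> alpha = psi \<and> u lam \<bullet> coroot psi = -1)"
proof -
  have alR: "alpha \<in> R" and alP: "pos alpha" using al unfolding pos_roots_def by auto
  have uW: "u \<in> weyl D" using WupP_weyl[OF u] .
  obtain ys where ys: "set ys \<subseteq> D" "u = simple_word ys" using uW unfolding weyl_def by blast
  have xW: "reflection alpha \<circ> u \<in> weyl D" using weyl_comp[OF refl_weyl[OF alR alP] uW] .
  define k where "k = u lam \<bullet> coroot alpha"
  have F1: "real (lenP D ai (reflection alpha \<circ> u)) = ht (lam - u lam) + k * ht alpha"
    using lenP_formula[OF xW] by (simp add: ht_refl k_def)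
  have F2: "real (lenP D ai u) = ht (lam - u lam)" using lenP_formula[OF uW] .
  have kb: "-1 \<le> k \<and> k \<le> 1" using orb_bound[OF ys(1) alR] ys(2) k_def by simp
  have kint: "k \<in> \<int>" using pair_int[OF ys(1) alR alP] ys(2) k_def by simp
  have hpos: "ht alpha > 0" using pos_ht_pos[OF alR alP] .
  show ?thesis
  proof (intro conjI impI)
    assume h: "lenP D ai (reflection alpha \<circ> u) = lenP D ai u + 1"
    then have "real (lenP D ai (reflection alpha \<circ> u)) = real (lenP D ai u) + 1" by simp
    then have kh: "k * ht alpha = 1" using F1 F2 by simp
    then have "k > 0" using hpos by (metis mult_nonpos_nonneg less_le not_le zero_less_one)
    moreover obtain m where m: "k = of_int m" using kint Ints_cases by blast
    ultimately have "m = 1" using kb by auto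
    then have k1: "k = 1" using m by simp
    then have "ht alpha = 1" using kh by simp
    then show "alpha \<in> D" using ht_one[OF alR alP] by simp
    show "u lam \<bullet> coroot alpha = 1" using k1 k_def by simp
  next
    assume h: "int (lenP D ai (reflection alpha \<circ> u)) = int (lenP D ai u) - (int (coxeter_number D psi) - 1)"
    then have "int (lenP D ai (reflection alpha \<circ> u)) = int (lenP D ai u) - int (height D psi)"
      by (simp add: coxeter_number_def)
    then have "real (lenP D ai (reflection alpha \<circ> u)) = real (lenP D ai u) - real (height D psi)"
      by (metis of_int_diff of_int_of_nat_eq)
    then have kh: "k * ht alpha = - ht psi" using F1 F2 highest_pos(2)[OF psi] by simp
    have pd: "pos (psi - alpha)" using psi alR unfolding highest_root_def by auto
    have hp: "ht psi - ht alpha \<ge> 0" using pos_ht_ge[OF pd] by (simp add: ht_diff)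
    have "k * ht alpha \<ge> - ht alpha" using kb hpos by (metis mult_le_cancel_right_pos mult_minus1 mult.commute)
    then have e1: "ht alpha = ht psi" and e2: "k * ht alpha = - ht alpha" using kh hp by linarith+
    have "(k + 1) * ht alpha = 0" using e2 by (simp add: algebra_simps)
    then have k1: "k = -1" using hpos by simp
    have "ht (psi - alpha) = 0" using e1 by (simp add: ht_diff)
    then have "psi - alpha = 0" using pos_ht_zero pd by blast
    then show ap: "alpha = psi" by simp
    show "u lam \<bullet> coroot psi = -1" using k1 k_def ap by simp
  qed
qed

end

theorem proposition17:
  fixes R D :: "'a::euclidean_space set" and ai lam psi alpha :: 'a and u :: "'a \<Rightarrow> 'a"
  assumes "root_system R" and "irreducible_rs R" and "simple_system R D"
    and "ai \<in> D" and "minuscule R D ai lam"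
    and "highest_root R D psi"
    and "u \<in> WupP D ai"
    and "alpha \<in> pos_roots R D"
  shows "(lenP D ai (reflection alpha \<circ> u) = lenP D ai u + 1
            \<longrightarrow> alpha \<in> D \<and> u lam \<bullet> coroot alpha = 1)
       \<and> (int (lenP D ai (reflection alpha \<circ> u))
              = int (lenP D ai u) - (int (coxeter_number D psi) - 1)
            \<longrightarrow> alpha = psi \<and> u lam \<bullet> coroot psi = -1)"
proof -
  interpret mrs R D ai lam
    by unfold_locales (use assms in auto)
  show ?thesis by (rule main[OF assms(6,7,8)])
qed

end
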